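(* Let $(X,\|\cdot\|)$ be a normed linear space, let $I$ be a non-trivial admissible ideal in $\mathbb{N}$, let $x=\{x_k\}_{k\in\mathbb{N}}$ be a sequence in $X$ and let $r>0$. Then $\operatorname{diam}(I\text{-}st\text{-}\mathrm{LIM}_x^r)\le 2r$. In particular, if $x$ is $I$-statistically convergent to $\xi\in X$, then $I\text{-}st\text{-}\mathrm{LIM}_x^r\supset \overline{B_r(\xi)}=\{y\in X:\|y-\xi\|\le r\}$, and so $\operatorname{diam}(I\text{-}st\text{-}\mathrm{LIM}_x^r)=2r$.
   Context: An ideal $I$ in $\mathbb{N}$ is a family of subsets of $\mathbb{N}$ containing $\emptyset$, closed under finite unions and under taking subsets; it is non-trivial if $\mathbb{N}\notin I$ and admissible if $\{n\}\in I$ for every $n\in\mathbb{N}$. A sequence $x=\{x_k\}$ in $X$ is $I$-statistically convergent to $\xi$ if for every $\varepsilon>0$ and $\delta>0$, $\{n\in\mathbb{N}:\frac1n|\{k\le n:\|x_k-\xi\|\ge\varepsilon\}|\ge\delta\}\in I$. For $r\ge 0$, $x$ is rough $I$-statistically convergent (or $r$-$I$-statistically convergent) to $\xi$ if for every $\varepsilon>0$ and $\delta>0$, $\{n\in\mathbb{N}:\frac1n|\{k\le n:\|x_k-\xi\|\ge r+\varepsilon\}|\ge\delta\}\in I$. $I\text{-}st\text{-}\mathrm{LIM}_x^r$ denotes the set of all $\xi\in X$ to which $x$ is $r$-$I$-statistically convergent. *)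

theory Defs
  imports "HOL-Analysis.Analysis"
begin

definition is_ideal :: "nat set set \<Rightarrow> bool" where
  "is_ideal I \<longleftrightarrow> {} \<in> I \<and> (\<forall>A\<in>I. \<forall>B\<in>I. A \<union> B \<in> I) \<and> (\<forall>A\<in>I. \<forall>B. B \<subseteq> A \<longrightarrow> B \<in> I)"

definition nontrivial_ideal :: "nat set set \<Rightarrow> bool" where
  "nontrivial_ideal I \<longleftrightarrow> UNIV \<notin> I"

definition admissible_ideal :: "nat set set \<Rightarrow> bool" where
  "admissible_ideal I \<longleftrightarrow> (\<forall>n. {n} \<in> I)"

text \<open>Terms of the sequence are x 1, x 2, ...; the density (1/n)|{k \<le> n : ...}| uses k in {1..n}.\<close>
definition I_stat_conv :: "nat set set \<Rightarrow> (nat \<Rightarrow> 'a::real_normed_vector) \<Rightarrow> 'a \<Rightarrow> bool" where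
  "I_stat_conv I x \<xi> \<longleftrightarrow> (\<forall>\<epsilon>>0. \<forall>\<delta>>0.
     {n. real (card {k\<in>{1..n}. norm (x k - \<xi>) \<ge> \<epsilon>}) / real n \<ge> \<delta>} \<in> I)"

definition rough_I_stat_conv :: "nat set set \<Rightarrow> real \<Rightarrow> (nat \<Rightarrow> 'a::real_normed_vector) \<Rightarrow> 'a \<Rightarrow> bool" where
  "rough_I_stat_conv I r x \<xi> \<longleftrightarrow> (\<forall>\<epsilon>>0. \<forall>\<delta>>0.
     {n. real (card {k\<in>{1..n}. norm (x k - \<xi>) \<ge> r + \<epsilon>}) / real n \<ge> \<delta>} \<in> I)"

definition I_st_LIM :: "nat set set \<Rightarrow> real \<Rightarrow> (nat \<Rightarrow> 'a::real_normed_vector) \<Rightarrow> 'a set" where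
  "I_st_LIM I r x = {\<xi>. rough_I_stat_conv I r x \<xi>}"

end

theory Submission
  imports Defs
begin

lemma rough_inst:
  "rough_I_stat_conv I r x a \<Longrightarrow> e > 0 \<Longrightarrow> d > 0 \<Longrightarrow>
   {n. real (card {k\<in>{1..n}. norm (x k - a) \<ge> r + e}) / real n \<ge> d} \<in> I"
  unfolding rough_I_stat_conv_def by blast

lemma pair_bound:
  fixes I :: "nat set set" and x :: "nat \<Rightarrow> 'a::real_normed_vector" and r :: real
  assumes id: "is_ideal I" and nt: "nontrivial_ideal I" and ad: "admissible_ideal I"
    and a: "a \<in> I_st_LIM I r x" and b: "b \<in> I_st_LIM I r x"
  shows "norm (a - b) \<le> 2 * r"
proof (rule ccontr)
  assume neg: "\<not> norm (a - b) \<le> 2 * r"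
  define e where "e = (norm (a - b) - 2 * r) / 2"
  have e: "e > 0" using neg by (simp add: e_def)
  define A where "A n = {k\<in>{1..n}. norm (x k - a) \<ge> r + e}" for n
  define B where "B n = {k\<in>{1..n}. norm (x k - b) \<ge> r + e}" for n
  define S1 where "S1 = {n. real (card (A n)) / real n \<ge> 1/2}"
  define S2 where "S2 = {n. real (card (B n)) / real n \<ge> 1/2}"
  have S1: "S1 \<in> I" unfolding S1_def A_def
    by (rule rough_inst) (use a e in \<open>auto simp: I_st_LIM_def\<close>)
  have S2: "S2 \<in> I" unfolding S2_def B_def
    by (rule rough_inst) (use b e in \<open>auto simp: I_st_LIM_def\<close>)
  have "UNIV \<subseteq> S1 \<union> S2 \<union> {0}"
  proof
    fix n :: nat
    show "n \<in> S1 \<union> S2 \<union> {0}"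
    proof (cases "n = 0")
      case False
      have sub: "{1..n} \<subseteq> A n \<union> B n"
      proof
        fix k assume k: "k \<in> {1..n}"
        have "norm (a - b) \<le> norm (x k - a) + norm (x k - b)"
          using norm_triangle_ineq4[of "x k - b" "x k - a"] by simp
        then have "norm (x k - a) \<ge> r + e \<or> norm (x k - b) \<ge> r + e"
          unfolding e_def by argo
        then show "k \<in> A n \<union> B n" using k unfolding A_def B_def by auto
      qed
      have "card {1..n} \<le> card (A n \<union> B n)"
        by (rule card_mono[OF _ sub]) (simp add: A_def B_def)
      also have "\<dots> \<le> card (A n) + card (B n)" by (rule card_Un_le)
      finally have "real n \<le> real (card (A n)) + real (card (B n))" by simp
      then have "real (card (A n)) \<ge> real n / 2 \<or> real (card (B n)) \<ge> real n / 2" by argo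
      moreover have "real n > 0" using False by simp
      ultimately have "n \<in> S1 \<or> n \<in> S2" unfolding S1_def S2_def
        by (auto simp: field_simps)
      then show ?thesis by auto
    qed simp
  qed
  then have "UNIV = S1 \<union> S2 \<union> {0}" by auto
  moreover have "S1 \<union> S2 \<union> {0} \<in> I" using id ad S1 S2
    unfolding is_ideal_def admissible_ideal_def by blast
  ultimately show False using nt unfolding nontrivial_ideal_def by simp
qed

theorem theorem3p1:
  fixes I :: "nat set set" and x :: "nat \<Rightarrow> 'a::real_normed_vector" and r :: real
  assumes "is_ideal I" and "nontrivial_ideal I" and "admissible_ideal I" and "r > 0"
  shows "(bounded (I_st_LIM I r x) \<and> diameter (I_st_LIM I r x) \<le> 2 * r) \<and>
         (\<forall>\<xi>. I_stat_conv I x \<xi> \<longrightarrow>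
           cball \<xi> r \<subseteq> I_st_LIM I r x \<and>
           ((\<exists>v::'a. v \<noteq> 0) \<longrightarrow> diameter (I_st_LIM I r x) = 2 * r))"
proof -
  have pb: "\<And>a b. a \<in> I_st_LIM I r x \<Longrightarrow> b \<in> I_st_LIM I r x \<Longrightarrow> norm (a - b) \<le> 2 * r"
    using pair_bound assms by blast
  have bd: "bounded (I_st_LIM I r x)"
    unfolding bounded_two_points using pb by (metis dist_norm)
  have dl: "diameter (I_st_LIM I r x) \<le> 2 * r"
    by (rule diameter_le) (use assms pb in auto)
  have part2: "cball \<xi> r \<subseteq> I_st_LIM I r x \<and>
           ((\<exists>v::'a. v \<noteq> 0) \<longrightarrow> diameter (I_st_LIM I r x) = 2 * r)"
    if conv: "I_stat_conv I x \<xi>" for \<xi>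
  proof -
    have cb: "cball \<xi> r \<subseteq> I_st_LIM I r x"
    proof
      fix y assume y: "y \<in> cball \<xi> r"
      then have yn: "norm (y - \<xi>) \<le> r" by (simp add: dist_norm norm_minus_commute)
      show "y \<in> I_st_LIM I r x"
        unfolding I_st_LIM_def rough_I_stat_conv_def
      proof (intro CollectI allI impI)
        fix e d :: real assume e: "e > 0" and d: "d > 0"
        let ?T = "{n. real (card {k\<in>{1..n}. norm (x k - \<xi>) \<ge> e}) / real n \<ge> d}"
        have T: "?T \<in> I" using conv e d unfolding I_stat_conv_def by auto
        have sub: "{n. real (card {k\<in>{1..n}. norm (x k - y) \<ge> r + e}) / real n \<ge> d} \<subseteq> ?T"
        proof
          fix n assume n: "n \<in> {n. real (card {k\<in>{1..n}. norm (x k - y) \<ge> r + e}) / real n \<ge> d}"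
          have ss: "{k\<in>{1..n}. norm (x k - y) \<ge> r + e} \<subseteq> {k\<in>{1..n}. norm (x k - \<xi>) \<ge> e}"
          proof
            fix k assume "k \<in> {k\<in>{1..n}. norm (x k - y) \<ge> r + e}"
            moreover have "norm (x k - y) \<le> norm (x k - \<xi>) + norm (y - \<xi>)"
              using norm_triangle_ineq4[of "x k - \<xi>" "y - \<xi>"] by simp
            ultimately show "k \<in> {k\<in>{1..n}. norm (x k - \<xi>) \<ge> e}" using yn by auto
          qed
          have "card {k\<in>{1..n}. norm (x k - y) \<ge> r + e} \<le> card {k\<in>{1..n}. norm (x k - \<xi>) \<ge> e}"
            by (rule card_mono[OF _ ss]) simp
          then have "real (card {k\<in>{1..n}. norm (x k - y) \<ge> r + e}) / real n
                     \<le> real (card {k\<in>{1..n}. norm (x k - \<xi>) \<ge> e}) / real n"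
            by (simp add: divide_right_mono)
          then show "n \<in> ?T" using n by auto
        qed
        show "{n. real (card {k\<in>{1..n}. norm (x k - y) \<ge> r + e}) / real n \<ge> d} \<in> I"
          using assms(1) T sub unfolding is_ideal_def by blast
      qed
    qed
    have "diameter (I_st_LIM I r x) = 2 * r" if ex: "\<exists>v::'a. v \<noteq> 0"
    proof -
      obtain v :: 'a where v: "v \<noteq> 0" using ex by blast
      define u where "u = (r / norm v) *\<^sub>R v"
      have nu: "norm u = r" unfolding u_def norm_scaleR using v assms(4) by simp
      have c1: "\<xi> + u \<in> cball \<xi> r" unfolding mem_cball dist_norm using nu by simp
      have c2: "\<xi> - u \<in> cball \<xi> r" unfolding mem_cball dist_norm using nu by simp
      have p1: "\<xi> + u \<in> I_st_LIM I r x" using cb c1 by (rule subsetD)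
      have p2: "\<xi> - u \<in> I_st_LIM I r x" using cb c2 by (rule subsetD)
      have eq: "(\<xi> + u) - (\<xi> - u) = 2 *\<^sub>R u" by (simp add: scaleR_2)
      have "dist (\<xi> + u) (\<xi> - u) = 2 * r"
        unfolding dist_norm eq norm_scaleR nu by simp
      then have "2 * r \<le> diameter (I_st_LIM I r x)"
        using diameter_bounded_bound[OF bd p1 p2] by linarith
      then show ?thesis using dl by linarith
    qed
    then show ?thesis using cb by blast
  qed
  show ?thesis using bd dl part2 by blast
qed

end
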